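(* Let the notation be as in the context, and for $\hat u\in U(\mathfrak g)$, $P\in\hat S(\mathfrak g^* )$ put $\langle\hat u,P\rangle_\phi:=\epsilon_S(P\triangleleft\hat u)$. For multiindices $I,J,K$: (iii) if $|I|<|J|$, then every monomial occurring in $\partial^J\triangleleft\hat x_I$ has degree at least $|J|-|I|$; (iv) if $|I|=|J|$, then $\partial^J\triangleleft\hat x_I-I!\,\delta^I_J$ has zero constant term; (v) $\langle\hat x_J,\partial^K\rangle_\phi=K!\,\delta^K_J$ whenever $K\ge J$ in the componentwise partial order; (vi) there is a unique family $\{\partial^{\{K\}}\}_{K\in\mathbb N_0^n}$ of elements of $\hat S(\mathfrak g^* )$ such that $\langle\hat x_J,\partial^{\{K\}}\rangle_\phi=K!\,\delta^K_J$ for all multiindices $K,J$.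
   Context: Let $k$ be a field of characteristic zero and $\mathfrak g$ a Lie algebra over $k$ of finite dimension $n$ with basis $\hat x_1,\dots,\hat x_n$ and $[\hat x_\mu,\hat x_\nu]=C^\lambda_{\mu\nu}\hat x_\lambda$; summation over repeated indices is understood. $U(\mathfrak g)$ is its universal enveloping algebra (a cocommutative Hopf algebra with $\hat x_\mu$ primitive, counit $\epsilon$, Sweedler notation $\Delta(u)=\sum u_{(1)}\otimes u_{(2)}$). $\hat S(\mathfrak g^* ):=k[[\partial^1,\dots,\partial^n]]$, and $\epsilon_S:\hat S(\mathfrak g^* )\to k$ is the constant-term map. Let $\mathcal C^\alpha_\beta:=C^\alpha_{\beta\gamma}\partial^\gamma$ and $\phi:=\frac{-\mathcal C}{e^{-\mathcal C}-1}=\sum_{N\ge0}\frac{(-1)^NB_N}{N!}\mathcal C^N$ ($B_N$ Bernoulli numbers), a matrix with entries in $\hat S(\mathfrak g^* )$. It is known (and assumed) that there is a unique right Hopf action $\triangleleft$ of $U(\mathfrak g)$ on $\hat S(\mathfrak g^* )$ (i.e. $(a\triangleleft u)\triangleleft v=a\triangleleft(uv)$, $(ab)\triangleleft u=\sum(a\triangleleft u_{(1)})(b\triangleleft u_{(2)})$, $1\triangleleft u=\epsilon(u)1$) such that $a\mapsto a\triangleleft\hat x_\alpha$ is the continuous derivation sending $\partial^\beta\mapsto\phi^\beta_\alpha$. For a multiindex $K=(k_1,\dots,k_n)\in\mathbb N_0^n$: $|K|=k_1+\dots+k_n$, $K!=k_1!\cdots k_n!$, $\hat x_K:=\hat x_1^{k_1}\cdots\hat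 x_n^{k_n}\in U(\mathfrak g)$, $\partial^K:=(\partial^1)^{k_1}\cdots(\partial^n)^{k_n}$, and $\delta^K_J$ is $1$ if $K=J$ and $0$ otherwise. *)

theory Defs
  imports "HOL-Library.FuncSet"
begin

text \<open>Indices of the basis of g run over 0..n-1 (instead of 1..n).
An element of the completed symmetric algebra k[[d^0,...,d^(n-1)]] is represented by
its coefficient function (nat => nat) => 'k (coefficient of the monomial d^M);
genuine elements have coefficients zero outside the multiindices.
Structure constants: C l m v is C^l_{m v}.\<close>

definition multiidx :: "nat \<Rightarrow> (nat \<Rightarrow> nat) set" where
  "multiidx n = {K. \<forall>i\<ge>n. K i = 0}"

type_synonym 'k pser = "(nat \<Rightarrow> nat) \<Rightarrow> 'k"

definition pseries :: "nat \<Rightarrow> ('k::zero) pser set" where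
  "pseries n = {P. \<forall>M. M \<notin> multiidx n \<longrightarrow> P M = 0}"

definition mabs :: "nat \<Rightarrow> (nat \<Rightarrow> nat) \<Rightarrow> nat" where
  "mabs n K = (\<Sum>i<n. K i)"

definition mfact :: "nat \<Rightarrow> (nat \<Rightarrow> nat) \<Rightarrow> nat" where
  "mfact n K = (\<Prod>i<n. fact (K i))"

definition mle :: "(nat \<Rightarrow> nat) \<Rightarrow> (nat \<Rightarrow> nat) \<Rightarrow> bool" where
  "mle J K \<longleftrightarrow> (\<forall>i. J i \<le> K i)"

definition mono :: "(nat \<Rightarrow> nat) \<Rightarrow> ('k::{zero,one}) pser" where
  "mono J = (\<lambda>M. if M = J then 1 else 0)"

definition const_term :: "'k pser \<Rightarrow> 'k" where
  "const_term P = P (\<lambda>_. 0)"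

definition pmul :: "('k::comm_semiring_1) pser \<Rightarrow> 'k pser \<Rightarrow> 'k pser" where
  "pmul P Q = (\<lambda>M. \<Sum>A\<in>{A. mle A M}. P A * Q (\<lambda>i. M i - A i))"

definition padd :: "('k::comm_semiring_1) pser \<Rightarrow> 'k pser \<Rightarrow> 'k pser" where
  "padd P Q = (\<lambda>M. P M + Q M)"

definition pderiv_var :: "nat \<Rightarrow> ('k::comm_semiring_1) pser \<Rightarrow> 'k pser" where
  "pderiv_var b P = (\<lambda>M. of_nat (M b + 1) * P (M(b := M b + 1)))"

fun bernoulli :: "nat \<Rightarrow> 'k::field_char_0" where
  "bernoulli m = (if m = 0 then 1
      else - (\<Sum>k<m. of_nat ((m + 1) choose k) * bernoulli k) / of_nat (m + 1))"

text \<open>The matrix \<C>^a_b = C^a_{b c} d^c (entry in row a, column b)\<close>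
definition Cmat :: "(nat \<Rightarrow> nat \<Rightarrow> nat \<Rightarrow> 'k::comm_semiring_1) \<Rightarrow> nat \<Rightarrow> nat \<Rightarrow> nat \<Rightarrow> 'k pser" where
  "Cmat C n a b = (\<lambda>M. \<Sum>c<n. C a b c * mono (\<lambda>i. if i = c then 1 else 0) M)"

fun Cpow :: "(nat \<Rightarrow> nat \<Rightarrow> nat \<Rightarrow> 'k::comm_semiring_1) \<Rightarrow> nat \<Rightarrow> nat \<Rightarrow> nat \<Rightarrow> nat \<Rightarrow> 'k pser" where
  "Cpow C n 0 a b = (if a = b then mono (\<lambda>_. 0) else (\<lambda>_. 0))"
| "Cpow C n (Suc N) a b = (\<lambda>M. \<Sum>c<n. pmul (Cpow C n N a c) (Cmat C n c b) M)"

text \<open>phi = sum_N (-1)^N B_N / N! \<C>^N; since \<C>^N is homogeneous of degree N, the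
coefficient of d^M in phi^a_b comes from the term N = |M| only.\<close>
definition phi :: "(nat \<Rightarrow> nat \<Rightarrow> nat \<Rightarrow> 'k::field_char_0) \<Rightarrow> nat \<Rightarrow> nat \<Rightarrow> nat \<Rightarrow> 'k pser" where
  "phi C n a b = (\<lambda>M. (-1) ^ mabs n M * bernoulli (mabs n M) / fact (mabs n M)
                       * Cpow C n (mabs n M) a b M)"

text \<open>The continuous derivation  P \<mapsto> P \<triangleleft> x_a,  d^b \<mapsto> phi^b_a\<close>
definition act_gen :: "(nat \<Rightarrow> nat \<Rightarrow> nat \<Rightarrow> 'k::field_char_0) \<Rightarrow> nat \<Rightarrow> nat \<Rightarrow> 'k pser \<Rightarrow> 'k pser" where
  "act_gen C n a P = (\<lambda>M. \<Sum>b<n. pmul (pderiv_var b P) (phi C n b a) M)"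

text \<open>P \<triangleleft> x_I for x_I = x_0^{I 0} ... x_{n-1}^{I (n-1)} (right action:
first x_0 is applied I 0 times, then x_1, ...)\<close>
fun act_upto :: "(nat \<Rightarrow> nat \<Rightarrow> nat \<Rightarrow> 'k::field_char_0) \<Rightarrow> nat \<Rightarrow> nat \<Rightarrow> (nat \<Rightarrow> nat) \<Rightarrow> 'k pser \<Rightarrow> 'k pser" where
  "act_upto C n 0 I P = P"
| "act_upto C n (Suc m) I P = (act_gen C n m ^^ I m) (act_upto C n m I P)"

definition act_mono :: "(nat \<Rightarrow> nat \<Rightarrow> nat \<Rightarrow> 'k::field_char_0) \<Rightarrow> nat \<Rightarrow> 'k pser \<Rightarrow> (nat \<Rightarrow> nat) \<Rightarrow> 'k pser" where
  "act_mono C n P I = act_upto C n n I P"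

definition pairing :: "(nat \<Rightarrow> nat \<Rightarrow> nat \<Rightarrow> 'k::field_char_0) \<Rightarrow> nat \<Rightarrow> (nat \<Rightarrow> nat) \<Rightarrow> 'k pser \<Rightarrow> 'k" where
  "pairing C n I P = const_term (act_mono C n P I)"

definition lie_structure_constants :: "nat \<Rightarrow> (nat \<Rightarrow> nat \<Rightarrow> nat \<Rightarrow> 'k::field_char_0) \<Rightarrow> bool" where
  "lie_structure_constants n C \<longleftrightarrow>
     (\<forall>l<n. \<forall>m<n. \<forall>v<n. C l m v = - C l v m) \<and>
     (\<forall>m<n. \<forall>v<n. \<forall>l<n. \<forall>e<n.
        (\<Sum>d<n. C d m v * C e d l + C d v l * C e d m + C d l m * C e d v) = 0)"

end

theory Submission
  imports Defs
begin


definition deg :: "nat \<Rightarrow> ('k::zero) pser \<Rightarrow> nat \<Rightarrow> bool" where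
  "deg n P d \<longleftrightarrow> (\<forall>M. P M \<noteq> 0 \<longrightarrow> M \<in> multiidx n \<and> d \<le> mabs n M)"

lemma le_mabs: "x < n \<Longrightarrow> L x \<le> mabs n L"
  unfolding mabs_def by (intro member_le_sum) auto

lemma finite_bounded_multiidx:
  "finite {L. L \<in> multiidx n \<and> mabs n L \<le> k}"
proof -
  have "{L. L \<in> multiidx n \<and> mabs n L \<le> k} \<subseteq>
        {f. \<forall>x. (x \<in> {..<n} \<longrightarrow> f x \<in> {..k}) \<and> (x \<notin> {..<n} \<longrightarrow> f x = 0)}"
    using le_mabs unfolding multiidx_def by (auto intro: order.trans)
  then show ?thesis by (rule finite_subset) (intro finite_set_of_finite_funs, auto)
qed

lemma mle_multiidx: "mle A M \<Longrightarrow> M \<in> multiidx n \<Longrightarrow> A \<in> multiidx n"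
proof -
  assume a: "mle A M" "M \<in> multiidx n"
  show ?thesis unfolding multiidx_def
  proof (intro CollectI allI impI)
    fix i assume "n \<le> i"
    then have "M i = 0" using a(2) by (simp add: multiidx_def)
    then show "A i = 0" using a(1) unfolding mle_def by (metis le_0_eq)
  qed
qed

lemma mle_mabs: "mle A M \<Longrightarrow> mabs n A \<le> mabs n M"
  unfolding mle_def mabs_def by (intro sum_mono) auto

lemma finite_mle:
  assumes "M \<in> multiidx n" shows "finite {A. mle A M}"
proof -
  have "{A. mle A M} \<subseteq> {L. L \<in> multiidx n \<and> mabs n L \<le> mabs n M}"
    using assms mle_multiidx mle_mabs by blast
  then show ?thesis using finite_bounded_multiidx finite_subset by blast
qed

lemma mle_eq:
  assumes "mle A M" "M \<in> multiidx n" "mabs n M \<le> mabs n A" shows "A = M"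
proof (rule ccontr)
  assume "A \<noteq> M"
  then obtain i where i: "A i \<noteq> M i" by auto
  have A: "A \<in> multiidx n" using assms mle_multiidx by blast
  have "i < n"
  proof (rule ccontr)
    assume "\<not> i < n"
    then have "A i = 0" "M i = 0" using A assms(2) unfolding multiidx_def by auto
    then show False using i by simp
  qed
  moreover have "A i < M i" using i assms(1) unfolding mle_def using le_neq_implies_less by blast
  ultimately have "mabs n A < mabs n M" unfolding mabs_def
    using assms(1) unfolding mle_def by (intro sum_strict_mono_ex1) auto
  then show False using assms(3) by simp
qed

lemma mabs_split: "mle A M \<Longrightarrow> mabs n M = mabs n A + mabs n (\<lambda>i. M i - A i)"
  unfolding mabs_def mle_def by (simp add: sum.distrib[symmetric])

lemma mabs_upd: "b < n \<Longrightarrow> mabs n (M(b := M b + 1)) = mabs n M + 1"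
proof -
  assume b: "b < n"
  have "mabs n (M(b := M b + 1)) = (\<Sum>i<n. M i + (if i = b then 1 else 0))"
    unfolding mabs_def by (intro sum.cong) auto
  also have "\<dots> = mabs n M + 1" unfolding mabs_def using b by (simp add: sum.distrib)
  finally show ?thesis .
qed

lemma multiidx_upd: "b < n \<Longrightarrow> (M(b := x) \<in> multiidx n) = (M \<in> multiidx n)"
  unfolding multiidx_def by auto

lemma mabs_zero[simp]: "mabs n (\<lambda>_. 0) = 0" by (simp add: mabs_def)
lemma multiidx_zero[simp]: "(\<lambda>_. 0) \<in> multiidx n" by (simp add: multiidx_def)

lemma deg_pmul:
  assumes "deg n P d" "deg n Q e" shows "deg n (pmul P Q) (d + e)"
  unfolding deg_def
proof (intro allI impI)
  fix M assume "pmul P Q M \<noteq> 0"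
  then obtain A where A0: "A \<in> {A. mle A M}" and nz: "P A * Q (\<lambda>i. M i - A i) \<noteq> 0"
    unfolding pmul_def by (rule sum.not_neutral_contains_not_neutral)
  then have A: "mle A M" by simp
  have "P A \<noteq> 0" "Q (\<lambda>i. M i - A i) \<noteq> 0" using nz by auto
  then have PA: "A \<in> multiidx n \<and> d \<le> mabs n A"
    and QA: "(\<lambda>i. M i - A i) \<in> multiidx n \<and> e \<le> mabs n (\<lambda>i. M i - A i)"
    using assms unfolding deg_def by auto
  have "M \<in> multiidx n" unfolding multiidx_def
  proof (intro CollectI allI impI)
    fix i assume "n \<le> i"
    then have "A i = 0" "M i - A i = 0" using PA QA unfolding multiidx_def by auto
    then show "M i = 0" by simp
  qed
  moreover have "d + e \<le> mabs n M" using mabs_split[OF A, of n] PA QA by simp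
  ultimately show "M \<in> multiidx n \<and> d + e \<le> mabs n M" by blast
qed

lemma deg_sum:
  assumes "\<And>b. b \<in> B \<Longrightarrow> deg n (f b) d" shows "deg n (\<lambda>M. \<Sum>b\<in>B. f b M) d"
  unfolding deg_def
proof (intro allI impI)
  fix M assume "(\<Sum>b\<in>B. f b M) \<noteq> 0"
  then obtain b where "b \<in> B" "f b M \<noteq> 0" by (rule sum.not_neutral_contains_not_neutral)
  then show "M \<in> multiidx n \<and> d \<le> mabs n M" using assms unfolding deg_def by blast
qed

lemma deg_le: "deg n P d \<Longrightarrow> e \<le> d \<Longrightarrow> deg n P e"
  unfolding deg_def by fastforce

lemma deg_Cmat: "deg n (Cmat C n a b) 0"
  unfolding Cmat_def
proof (rule deg_sum)
  fix c assume "c \<in> {..<n}"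
  then show "deg n (\<lambda>M. C a b c * mono (\<lambda>i. if i = c then 1 else 0) M) 0"
    unfolding deg_def mono_def multiidx_def by auto
qed

lemma deg_Cpow: "deg n (Cpow C n N a b) 0"
proof (induction N arbitrary: a b)
  case 0
  then show ?case by (auto simp: deg_def mono_def)
next
  case (Suc N)
  show ?case unfolding Cpow.simps
    by (rule deg_sum) (use deg_pmul[OF Suc deg_Cmat] in simp)
qed

lemma deg_phi: "deg n (phi C n b a) 0"
  unfolding deg_def
proof (intro allI impI)
  fix M assume "phi C n b a M \<noteq> 0"
  then have "Cpow C n (mabs n M) b a M \<noteq> 0" unfolding phi_def by auto
  then show "M \<in> multiidx n \<and> 0 \<le> mabs n M" using deg_Cpow[of n C "mabs n M" b a]
    unfolding deg_def by auto
qed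

lemma deg_pderiv: "b < n \<Longrightarrow> deg n P d \<Longrightarrow> deg n (pderiv_var b P) (d - 1)"
proof -
  assume b: "b < n" and P: "deg n P d"
  show ?thesis unfolding deg_def
  proof (intro allI impI)
    fix M assume "pderiv_var b P M \<noteq> 0"
    then have "P (M(b := M b + 1)) \<noteq> 0" unfolding pderiv_var_def by auto
    then have "M(b := M b + 1) \<in> multiidx n" "d \<le> mabs n (M(b := M b + 1))"
      using P unfolding deg_def by auto
    then show "M \<in> multiidx n \<and> d - 1 \<le> mabs n M"
      using multiidx_upd[OF b] mabs_upd[OF b] by auto
  qed
qed

lemma deg_act_gen: "deg n P d \<Longrightarrow> deg n (act_gen C n a P) (d - 1)"
  unfolding act_gen_def
  by (rule deg_sum) (use deg_pmul[OF deg_pderiv deg_phi] in auto)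

lemma deg_funpow: "deg n P d \<Longrightarrow> deg n ((act_gen C n a ^^ k) P) (d - k)"
proof (induction k)
  case 0 then show ?case by simp
next
  case (Suc k)
  have "deg n (act_gen C n a ((act_gen C n a ^^ k) P)) (d - k - 1)"
    by (rule deg_act_gen) (rule Suc.IH[OF Suc.prems])
  then show ?case by simp
qed

lemma deg_act_upto: "deg n P d \<Longrightarrow> deg n (act_upto C n m I P) (d - (\<Sum>i<m. I i))"
proof (induction m)
  case 0 then show ?case by simp
next
  case (Suc m)
  have "deg n ((act_gen C n m ^^ I m) (act_upto C n m I P)) (d - (\<Sum>i<m. I i) - I m)"
    by (rule deg_funpow) (rule Suc.IH[OF Suc.prems])
  then show ?case by simp
qed



declare bernoulli.simps[simp del]

lemma bernoulli0: "bernoulli 0 = 1" by (subst bernoulli.simps) simp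

lemma phi0: "phi C n b a (\<lambda>_. 0) = (if b = a then 1 else 0)"
  unfolding phi_def by (simp add: mono_def bernoulli0)

lemma sum_single:
  assumes "finite S" "x \<in> S" "\<And>y. y \<in> S \<Longrightarrow> y \<noteq> x \<Longrightarrow> f y = 0"
  shows "sum f S = f x"
proof -
  have "sum f S = f x + sum f (S - {x})" using assms(1,2) by (rule sum.remove)
  moreover have "sum f (S - {x}) = 0" using assms(3) by (intro sum.neutral) auto
  ultimately show ?thesis by simp
qed

lemma agree:
  assumes a: "a < n" and d: "1 \<le> d" and P: "deg n P d" and M: "M \<in> multiidx n"
    and Mabs: "mabs n M = d - 1"
  shows "act_gen C n a P M = pderiv_var a P M"
proof -
  have fin: "finite {A. mle A M}" using finite_mle[OF M] .
  have Mle: "M \<in> {A. mle A M}" by (simp add: mle_def)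
  have z: "pderiv_var b P A = 0" if b: "b < n" and A: "A \<in> {A. mle A M}" and ne: "A \<noteq> M" for b A
  proof (rule ccontr)
    assume "pderiv_var b P A \<noteq> 0"
    then have "d - 1 \<le> mabs n A" using deg_pderiv[OF b P] unfolding deg_def by blast
    then have "A = M" using mle_eq[of A M n] A M Mabs by simp
    then show False using ne by simp
  qed
  have "act_gen C n a P M = (\<Sum>b<n. pderiv_var b P M * phi C n b a (\<lambda>i. M i - M i))"
    unfolding act_gen_def pmul_def
  proof (rule sum.cong[OF refl])
    fix b assume "b \<in> {..<n}"
    then show "(\<Sum>A\<in>{A. mle A M}. pderiv_var b P A * phi C n b a (\<lambda>i. M i - A i)) =
        pderiv_var b P M * phi C n b a (\<lambda>i. M i - M i)"
      by (intro sum_single[OF fin Mle]) (use z in auto)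
  qed
  also have "\<dots> = (\<Sum>b<n. if b = a then pderiv_var b P M else 0)"
    by (intro sum.cong) (auto simp: phi0)
  also have "\<dots> = pderiv_var a P M" using a by simp
  finally show ?thesis .
qed

definition agreeP :: "nat \<Rightarrow> ('k::zero) pser \<Rightarrow> 'k pser \<Rightarrow> nat \<Rightarrow> bool" where
  "agreeP n P Q d \<longleftrightarrow> deg n P d \<and> (\<forall>M\<in>multiidx n. mabs n M = d \<longrightarrow> P M = Q M)"

lemma inv_step:
  assumes a: "a < n" and d: "1 \<le> d" and PQ: "agreeP n P Q d"
  shows "agreeP n (act_gen C n a P) (pderiv_var a Q) (d - 1)"
  unfolding agreeP_def
proof (intro conjI ballI impI)
  show "deg n (act_gen C n a P) (d - 1)" using PQ deg_act_gen unfolding agreeP_def by blast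
next
  fix M assume M: "M \<in> multiidx n" and Ma: "mabs n M = d - 1"
  have "act_gen C n a P M = pderiv_var a P M"
    using agree[OF a d _ M Ma] PQ unfolding agreeP_def by blast
  also have "\<dots> = pderiv_var a Q M"
  proof -
    have "M(a := M a + 1) \<in> multiidx n" using multiidx_upd[OF a] M by simp
    moreover have "mabs n (M(a := M a + 1)) = d" using mabs_upd[OF a] Ma d by simp
    ultimately have "P (M(a := M a + 1)) = Q (M(a := M a + 1))"
      using PQ unfolding agreeP_def by blast
    then show ?thesis unfolding pderiv_var_def by simp
  qed
  finally show "act_gen C n a P M = pderiv_var a Q M" .
qed

lemma inv_funpow:
  assumes a: "a < n"
  shows "k \<le> d \<Longrightarrow> agreeP n P Q d \<Longrightarrow>
    agreeP n ((act_gen C n a ^^ k) P) ((pderiv_var a ^^ k) Q) (d - k)"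
proof (induction k)
  case 0 then show ?case by simp
next
  case (Suc k)
  have IH: "agreeP n ((act_gen C n a ^^ k) P) ((pderiv_var a ^^ k) Q) (d - k)"
    using Suc by simp
  have d1: "1 \<le> d - k" using Suc.prems by simp
  have "agreeP n (act_gen C n a ((act_gen C n a ^^ k) P)) (pderiv_var a ((pderiv_var a ^^ k) Q)) (d - k - 1)"
    using inv_step[OF a d1 IH] .
  then show ?case by simp
qed

fun dupto :: "nat \<Rightarrow> (nat \<Rightarrow> nat) \<Rightarrow> ('k::comm_semiring_1) pser \<Rightarrow> 'k pser" where
  "dupto 0 I P = P"
| "dupto (Suc m) I P = (pderiv_var m ^^ I m) (dupto m I P)"

lemma inv_upto:
  "m \<le> n \<Longrightarrow> (\<Sum>i<m. I i) \<le> d \<Longrightarrow> agreeP n P Q d \<Longrightarrow>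
    agreeP n (act_upto C n m I P) (dupto m I Q) (d - (\<Sum>i<m. I i))"
proof (induction m)
  case 0 then show ?case by simp
next
  case (Suc m)
  have IH: "agreeP n (act_upto C n m I P) (dupto m I Q) (d - (\<Sum>i<m. I i))"
    using Suc by simp
  have "agreeP n ((act_gen C n m ^^ I m) (act_upto C n m I P)) ((pderiv_var m ^^ I m) (dupto m I Q))
      (d - (\<Sum>i<m. I i) - I m)"
    by (rule inv_funpow) (use Suc.prems IH in auto)
  then show ?case by simp
qed

lemma pderiv_pow:
  "(pderiv_var a ^^ k) P M = pochhammer (of_nat (M a + 1)) k * P (M(a := M a + k))"
proof (induction k arbitrary: M)
  case 0 then show ?case by simp
next
  case (Suc k)
  have "(pderiv_var a ^^ Suc k) P M = of_nat (M a + 1) * (pderiv_var a ^^ k) P (M(a := M a + 1))"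
    by (simp add: pderiv_var_def)
  also have "\<dots> = of_nat (M a + 1) * (pochhammer (of_nat (M a + 1) + 1) k * P (M(a := M a + Suc k)))"
  proof -
    have e: "(M(a := M a + 1))(a := (M(a := M a + 1)) a + k) = M(a := M a + Suc k)" by simp
    show ?thesis unfolding Suc.IH e by (simp add: add_ac)
  qed
  also have "\<dots> = pochhammer (of_nat (M a + 1)) (Suc k) * P (M(a := M a + Suc k))"
    by (simp only: pochhammer_rec mult.assoc)
  finally show ?case .
qed

lemma dupto_formula:
  "dupto m I Q M = (\<Prod>i<m. pochhammer (of_nat (M i + 1)) (I i)) * Q (\<lambda>i. if i < m then M i + I i else M i)"
proof (induction m arbitrary: M)
  case 0 then show ?case by simp
next
  case (Suc m)
  let ?M' = "M(m := M m + I m)"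
  have "dupto (Suc m) I Q M = pochhammer (of_nat (M m + 1)) (I m) * dupto m I Q ?M'"
    by (simp add: pderiv_pow)
  also have "dupto m I Q ?M' = (\<Prod>i<m. pochhammer (of_nat (M i + 1)) (I i))
      * Q (\<lambda>i. if i < Suc m then M i + I i else M i)"
  proof -
    have h1: "(\<Prod>i<m. pochhammer (of_nat (?M' i + 1)) (I i)) = (\<Prod>i<m. pochhammer (of_nat (M i + 1)) (I i))"
      by (intro prod.cong) auto
    have h2: "(\<lambda>i. if i < m then ?M' i + I i else ?M' i) = (\<lambda>i. if i < Suc m then M i + I i else M i)"
      by (auto simp: fun_eq_iff less_Suc_eq)
    show ?thesis unfolding Suc.IH[of ?M'] h1 h2 ..
  qed
  finally show ?case by (simp add: mult_ac)
qed



lemma deg_mono: "J \<in> multiidx n \<Longrightarrow> deg n (mono J) (mabs n J)"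
  unfolding deg_def mono_def by auto

lemma deg_const: "deg n P d \<Longrightarrow> 1 \<le> d \<Longrightarrow> P (\<lambda>_. 0) = 0"
proof (rule ccontr)
  assume "deg n P d" "1 \<le> d" "P (\<lambda>_. 0) \<noteq> 0"
  then have "d \<le> mabs n (\<lambda>_. 0)" unfolding deg_def by blast
  then show False using \<open>1 \<le> d\<close> by simp
qed

lemma iv_core:
  assumes I: "I \<in> multiidx n" and J: "J \<in> multiidx n" and eq: "mabs n I = mabs n J"
  shows "const_term (act_mono C n (mono J) I) = of_nat (mfact n I) * (if I = J then 1 else 0)"
proof -
  have a0: "agreeP n (mono J) (mono J) (mabs n J)"
    using deg_mono[OF J] unfolding agreeP_def by simp
  have "agreeP n (act_upto C n n I (mono J)) (dupto n I (mono J)) (mabs n J - (\<Sum>i<n. I i))"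
    by (rule inv_upto[OF le_refl _ a0]) (use eq in \<open>simp add: mabs_def\<close>)
  then have ag: "agreeP n (act_upto C n n I (mono J)) (dupto n I (mono J)) 0"
    using eq by (simp add: mabs_def)
  have "const_term (act_mono C n (mono J) I) = dupto n I (mono J) (\<lambda>_. 0)"
    using ag unfolding agreeP_def const_term_def act_mono_def by simp
  also have "\<dots> = (\<Prod>i<n. pochhammer 1 (I i)) * mono J (\<lambda>i. if i < n then 0 + I i else 0)"
    by (simp add: dupto_formula)
  also have "(\<lambda>i. if i < n then 0 + I i else (0::nat)) = I"
    using I by (auto simp: multiidx_def fun_eq_iff)
  also have "(\<Prod>i<n. pochhammer 1 (I i)) = (of_nat (mfact n I) :: 'a)"
    by (simp add: mfact_def of_nat_prod flip: pochhammer_fact)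
  finally show ?thesis by (simp add: mono_def)
qed

lemma A_lt:
  assumes J: "J \<in> multiidx n" and L: "L \<in> multiidx n" and lt: "mabs n J < mabs n L"
  shows "pairing C n J (mono L) = 0"
proof -
  have "deg n (act_upto C n n J (mono L)) (mabs n L - (\<Sum>i<n. J i))"
    by (rule deg_act_upto[OF deg_mono[OF L]])
  then show ?thesis unfolding pairing_def const_term_def act_mono_def
    by (rule deg_const) (use lt in \<open>simp add: mabs_def\<close>)
qed

lemma A_eq:
  assumes J: "J \<in> multiidx n" and L: "L \<in> multiidx n" and eq: "mabs n J = mabs n L"
  shows "pairing C n J (mono L) = of_nat (mfact n J) * (if J = L then 1 else 0)"
  unfolding pairing_def using iv_core[OF J L eq] .

lemma act_gen_lin:
  fixes c :: "'b \<Rightarrow> 'k::field_char_0"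
  shows "act_gen C n a (\<lambda>M. \<Sum>L\<in>F. c L * f L M) = (\<lambda>M. \<Sum>L\<in>F. c L * act_gen C n a (f L) M)"
proof (rule ext)
  fix M
  let ?S = "{A. mle A M}"
  have "act_gen C n a (\<lambda>M. \<Sum>L\<in>F. c L * f L M) M =
     (\<Sum>b<n. \<Sum>A\<in>?S. \<Sum>L\<in>F. c L * (of_nat (A b + 1) * f L (A(b := A b + 1)) * phi C n b a (\<lambda>i. M i - A i)))"
    unfolding act_gen_def pmul_def pderiv_var_def
    by (simp add: sum_distrib_left sum_distrib_right mult_ac)
  also have "\<dots> = (\<Sum>b<n. \<Sum>L\<in>F. \<Sum>A\<in>?S. c L * (of_nat (A b + 1) * f L (A(b := A b + 1)) * phi C n b a (\<lambda>i. M i - A i)))"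
    by (intro sum.cong refl sum.swap)
  also have "\<dots> = (\<Sum>L\<in>F. \<Sum>b<n. \<Sum>A\<in>?S. c L * (of_nat (A b + 1) * f L (A(b := A b + 1)) * phi C n b a (\<lambda>i. M i - A i)))"
    by (rule sum.swap)
  also have "\<dots> = (\<Sum>L\<in>F. c L * act_gen C n a (f L) M)"
    unfolding act_gen_def pmul_def pderiv_var_def
    by (simp add: sum_distrib_left)
  finally show "act_gen C n a (\<lambda>M. \<Sum>L\<in>F. c L * f L M) M = (\<Sum>L\<in>F. c L * act_gen C n a (f L) M)" .
qed

lemma act_gen_add:
  "act_gen C n a (\<lambda>M. P M + Q M) = (\<lambda>M. act_gen C n a P M + act_gen C n a Q M)"
  unfolding act_gen_def pmul_def pderiv_var_def
  by (simp add: fun_eq_iff distrib_left distrib_right sum.distrib)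

lemma funpow_lin:
  fixes c :: "'b \<Rightarrow> 'k::field_char_0"
  shows "(act_gen C n a ^^ k) (\<lambda>M. \<Sum>L\<in>F. c L * f L M) = (\<lambda>M. \<Sum>L\<in>F. c L * (act_gen C n a ^^ k) (f L) M)"
  by (induction k) (simp_all add: act_gen_lin)

lemma funpow_add:
  "(act_gen C n a ^^ k) (\<lambda>M. P M + Q M) = (\<lambda>M. (act_gen C n a ^^ k) P M + (act_gen C n a ^^ k) Q M)"
  by (induction k) (simp_all add: act_gen_add)

lemma upto_lin:
  fixes c :: "'b \<Rightarrow> 'k::field_char_0"
  shows "act_upto C n m I (\<lambda>M. \<Sum>L\<in>F. c L * f L M) = (\<lambda>M. \<Sum>L\<in>F. c L * act_upto C n m I (f L) M)"
  by (induction m) (simp_all add: funpow_lin)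

lemma upto_add:
  "act_upto C n m I (\<lambda>M. P M + Q M) = (\<lambda>M. act_upto C n m I P M + act_upto C n m I Q M)"
  by (induction m) (simp_all add: funpow_add)



definition FJ :: "nat \<Rightarrow> (nat \<Rightarrow> nat) \<Rightarrow> (nat \<Rightarrow> nat) set" where
  "FJ n J = {L. L \<in> multiidx n \<and> mabs n L \<le> mabs n J}"
definition FJ' :: "nat \<Rightarrow> (nat \<Rightarrow> nat) \<Rightarrow> (nat \<Rightarrow> nat) set" where
  "FJ' n J = {L. L \<in> multiidx n \<and> mabs n L < mabs n J}"

lemma finite_FJ: "finite (FJ n J)"
  unfolding FJ_def by (rule finite_bounded_multiidx)
lemma finite_FJ': "finite (FJ' n J)"
  by (rule finite_subset[OF _ finite_FJ[of n J]]) (auto simp: FJ_def FJ'_def)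

lemma pairing_expand:
  fixes C :: "nat \<Rightarrow> nat \<Rightarrow> nat \<Rightarrow> 'k::field_char_0"
  assumes P: "P \<in> pseries n" and J: "J \<in> multiidx n"
  shows "pairing C n J P = (\<Sum>L\<in>FJ n J. P L * pairing C n J (mono L))"
proof -
  define H where "H = (\<lambda>M. if M \<in> FJ n J then 0 else P M)"
  have Pdec: "P = (\<lambda>M. (\<Sum>L\<in>FJ n J. P L * mono L M) + H M)"
  proof (rule ext)
    fix M
    have "(\<Sum>L\<in>FJ n J. P L * mono L M) = (\<Sum>L\<in>FJ n J. if M = L then P L else 0)"
      by (intro sum.cong) (auto simp: mono_def)
    also have "\<dots> = (if M \<in> FJ n J then P M else 0)" using finite_FJ by simp
    finally show "P M = (\<Sum>L\<in>FJ n J. P L * mono L M) + H M" by (simp add: H_def)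
  qed
  have degH: "deg n H (mabs n J + 1)" unfolding deg_def
  proof (intro allI impI)
    fix M assume "H M \<noteq> 0"
    then have "M \<notin> FJ n J" "P M \<noteq> 0" unfolding H_def by (auto split: if_splits)
    moreover from this have "M \<in> multiidx n" using P unfolding pseries_def by blast
    ultimately show "M \<in> multiidx n \<and> mabs n J + 1 \<le> mabs n M" unfolding FJ_def by auto
  qed
  have H0: "act_upto C n n J H (\<lambda>_. 0) = 0"
  proof (rule deg_const)
    show "deg n (act_upto C n n J H) (mabs n J + 1 - (\<Sum>i<n. J i))"
      by (rule deg_act_upto[OF degH])
    show "1 \<le> mabs n J + 1 - (\<Sum>i<n. J i)" by (simp add: mabs_def)
  qed
  have "pairing C n J P = act_upto C n n J (\<lambda>M. (\<Sum>L\<in>FJ n J. P L * mono L M) + H M) (\<lambda>_. 0)"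
    unfolding pairing_def const_term_def act_mono_def by (subst Pdec) (rule refl)
  also have "\<dots> = (\<Sum>L\<in>FJ n J. P L * act_upto C n n J (mono L) (\<lambda>_. 0))"
    unfolding upto_add upto_lin H0 by simp
  finally show ?thesis unfolding pairing_def const_term_def act_mono_def .
qed

lemma split_sum:
  fixes C :: "nat \<Rightarrow> nat \<Rightarrow> nat \<Rightarrow> 'k::field_char_0"
  assumes J: "J \<in> multiidx n"
  shows "(\<Sum>L\<in>FJ n J. x L * pairing C n J (mono L)) =
         (\<Sum>L\<in>FJ' n J. x L * pairing C n J (mono L)) + x J * of_nat (mfact n J)"
proof -
  define E where "E = {L. L \<in> multiidx n \<and> mabs n L = mabs n J}"
  have FE: "FJ n J = FJ' n J \<union> E" unfolding FJ_def FJ'_def E_def by auto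
  have finE: "finite E" by (rule finite_subset[OF _ finite_FJ[of n J]]) (auto simp: FJ_def E_def)
  have "(\<Sum>L\<in>FJ n J. x L * pairing C n J (mono L)) =
        (\<Sum>L\<in>FJ' n J. x L * pairing C n J (mono L)) + (\<Sum>L\<in>E. x L * pairing C n J (mono L))"
    unfolding FE by (rule sum.union_disjoint[OF finite_FJ' finE]) (auto simp: FJ'_def E_def)
  also have "(\<Sum>L\<in>E. x L * pairing C n J (mono L)) = (\<Sum>L\<in>E. if J = L then x J * of_nat (mfact n J) else 0)"
    by (intro sum.cong refl) (auto simp: E_def A_eq[OF J])
  also have "\<dots> = x J * of_nat (mfact n J)" using finE J by (simp add: E_def)
  finally show ?thesis .
qed

lemma mfact_nz: "(of_nat (mfact n J) :: 'k::field_char_0) \<noteq> 0"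
  unfolding mfact_def by (simp add: prod_zero_iff)



primrec cf :: "(nat \<Rightarrow> nat \<Rightarrow> nat \<Rightarrow> 'k::field_char_0) \<Rightarrow> nat \<Rightarrow> (nat \<Rightarrow> nat) \<Rightarrow> nat \<Rightarrow> (nat \<Rightarrow> nat) \<Rightarrow> 'k" where
  "cf C n K 0 L = (if L = K then 1 else 0)"
| "cf C n K (Suc k) L = (if mabs n L = Suc k \<and> mabs n K < Suc k
     then - (\<Sum>L'\<in>FJ' n L. pairing C n L (mono L') * cf C n K k L') / of_nat (mfact n L)
     else cf C n K k L)"

lemma cf_low: "mabs n L \<le> mabs n K \<Longrightarrow> cf C n K k L = (if L = K then 1 else 0)"
  by (induction k) auto

lemma cf_stable: "mabs n L \<le> k \<Longrightarrow> cf C n K k L = cf C n K (mabs n L) L"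
proof (induction k)
  case 0 then show ?case by simp
next
  case (Suc k)
  show ?case
  proof (cases "mabs n L = Suc k")
    case True then show ?thesis by simp
  next
    case False
    then have "mabs n L \<le> k" using Suc.prems by simp
    then show ?thesis using Suc.IH False by simp
  qed
qed

definition cc where "cc C n K L = cf C n K (mabs n L) L"

lemma cc_low: "mabs n L \<le> mabs n K \<Longrightarrow> cc C n K L = (if L = K then 1 else 0)"
  unfolding cc_def by (rule cf_low)

lemma cc_rec:
  assumes lt: "mabs n K < mabs n L"
  shows "cc C n K L = - (\<Sum>L'\<in>FJ' n L. pairing C n L (mono L') * cc C n K L') / of_nat (mfact n L)"
proof -
  obtain k where k: "mabs n L = Suc k" using lt by (cases "mabs n L") auto
  have "(\<Sum>L'\<in>FJ' n L. pairing C n L (mono L') * cf C n K k L') =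
        (\<Sum>L'\<in>FJ' n L. pairing C n L (mono L') * cc C n K L')"
    by (intro sum.cong refl) (auto simp: FJ'_def cc_def k intro!: cf_stable)
  then show ?thesis unfolding cc_def using k lt by simp
qed

lemma existence:
  fixes C :: "nat \<Rightarrow> nat \<Rightarrow> nat \<Rightarrow> 'k::field_char_0"
  assumes K: "K \<in> multiidx n" and J: "J \<in> multiidx n"
  shows "pairing C n J (\<lambda>M. if M \<in> multiidx n then cc C n K M else 0) =
         of_nat (mfact n K) * (if K = J then 1 else 0)"
proof -
  let ?P = "\<lambda>M. if M \<in> multiidx n then cc C n K M else 0"
  have Pp: "?P \<in> pseries n" by (simp add: pseries_def)
  have "pairing C n J ?P = (\<Sum>L\<in>FJ n J. ?P L * pairing C n J (mono L))"
    by (rule pairing_expand[OF Pp J])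
  also have "\<dots> = (\<Sum>L\<in>FJ n J. cc C n K L * pairing C n J (mono L))"
    by (intro sum.cong refl) (auto simp: FJ_def)
  also have "\<dots> = (\<Sum>L\<in>FJ' n J. cc C n K L * pairing C n J (mono L)) + cc C n K J * of_nat (mfact n J)"
    by (rule split_sum[OF J])
  also have "\<dots> = of_nat (mfact n K) * (if K = J then 1 else 0)"
  proof (cases "mabs n J \<le> mabs n K")
    case True
    have "(\<Sum>L\<in>FJ' n J. cc C n K L * pairing C n J (mono L)) = 0"
    proof (intro sum.neutral ballI)
      fix L assume "L \<in> FJ' n J"
      then have "mabs n L < mabs n K" "L \<noteq> K" using True unfolding FJ'_def by auto
      then show "cc C n K L * pairing C n J (mono L) = 0" using cc_low[of n L K C] by simp
    qed
    moreover have "cc C n K J = (if J = K then 1 else 0)" using cc_low[OF True] .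
    ultimately show ?thesis by auto
  next
    case False
    then have ne: "K \<noteq> J" by auto
    have "cc C n K J * of_nat (mfact n J) = - (\<Sum>L\<in>FJ' n J. pairing C n J (mono L) * cc C n K L)"
      using cc_rec[of n K J C] False mfact_nz[of n J] by simp
    then show ?thesis using ne by (simp add: mult.commute)
  qed
  finally show ?thesis .
qed

lemma uniq_aux:
  fixes C :: "nat \<Rightarrow> nat \<Rightarrow> nat \<Rightarrow> 'k::field_char_0"
  assumes P: "P \<in> pseries n" and Q: "Q \<in> pseries n"
    and eq: "\<And>J. J \<in> multiidx n \<Longrightarrow> pairing C n J P = pairing C n J Q"
  shows "L \<in> multiidx n \<Longrightarrow> P L = Q L"
proof (induction "mabs n L" arbitrary: L rule: less_induct)
  case less
  have s: "(\<Sum>L'\<in>FJ' n L. P L' * pairing C n L (mono L')) = (\<Sum>L'\<in>FJ' n L. Q L' * pairing C n L (mono L'))"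
    by (intro sum.cong refl) (auto simp: FJ'_def intro: less.hyps)
  have "pairing C n L P = pairing C n L Q" using eq[OF less.prems] .
  then have "(\<Sum>L'\<in>FJ' n L. P L' * pairing C n L (mono L')) + P L * of_nat (mfact n L) =
             (\<Sum>L'\<in>FJ' n L. Q L' * pairing C n L (mono L')) + Q L * of_nat (mfact n L)"
    unfolding pairing_expand[OF P less.prems] pairing_expand[OF Q less.prems] split_sum[OF less.prems] .
  then show ?case using s mfact_nz[of n L] by simp
qed

lemma uniq:
  fixes C :: "nat \<Rightarrow> nat \<Rightarrow> nat \<Rightarrow> 'k::field_char_0"
  assumes P: "P \<in> pseries n" and Q: "Q \<in> pseries n"
    and eq: "\<And>J. J \<in> multiidx n \<Longrightarrow> pairing C n J P = pairing C n J Q"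
  shows "P = Q"
proof (rule ext)
  fix L show "P L = Q L"
  proof (cases "L \<in> multiidx n")
    case True then show ?thesis using uniq_aux[OF P Q eq] by blast
  next
    case False then show ?thesis using P Q unfolding pseries_def by simp
  qed
qed

theorem lemma1:
  fixes C :: "nat \<Rightarrow> nat \<Rightarrow> nat \<Rightarrow> 'k::field_char_0" and n :: nat
  assumes "lie_structure_constants n C"
  shows
    "(\<forall>I\<in>multiidx n. \<forall>J\<in>multiidx n. mabs n I < mabs n J \<longrightarrow>
        (\<forall>M. act_mono C n (mono J) I M \<noteq> 0 \<longrightarrow> mabs n M \<ge> mabs n J - mabs n I))
   \<and> (\<forall>I\<in>multiidx n. \<forall>J\<in>multiidx n. mabs n I = mabs n J \<longrightarrow>
        const_term (act_mono C n (mono J) I) - of_nat (mfact n I) * (if I = J then 1 else 0) = 0)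
   \<and> (\<forall>J\<in>multiidx n. \<forall>K\<in>multiidx n. mle J K \<longrightarrow>
        pairing C n J (mono K) = of_nat (mfact n K) * (if K = J then 1 else 0))
   \<and> (\<exists>!d. d \<in> (multiidx n \<rightarrow>\<^sub>E pseries n) \<and>
        (\<forall>K\<in>multiidx n. \<forall>J\<in>multiidx n.
           pairing C n J (d K) = of_nat (mfact n K) * (if K = J then 1 else 0)))"
proof (intro conjI)
  show "\<forall>I\<in>multiidx n. \<forall>J\<in>multiidx n. mabs n I < mabs n J \<longrightarrow>
        (\<forall>M. act_mono C n (mono J) I M \<noteq> 0 \<longrightarrow> mabs n M \<ge> mabs n J - mabs n I)"
  proof (intro ballI impI allI)
    fix I J M assume J: "J \<in> multiidx n" and nz: "act_mono C n (mono J) I M \<noteq> 0"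
    have "deg n (act_upto C n n I (mono J)) (mabs n J - (\<Sum>i<n. I i))"
      by (rule deg_act_upto[OF deg_mono[OF J]])
    then show "mabs n M \<ge> mabs n J - mabs n I"
      using nz unfolding deg_def act_mono_def mabs_def[of n I] by blast
  qed
  show "\<forall>I\<in>multiidx n. \<forall>J\<in>multiidx n. mabs n I = mabs n J \<longrightarrow>
        const_term (act_mono C n (mono J) I) - of_nat (mfact n I) * (if I = J then 1 else 0) = 0"
  proof (intro ballI impI)
    fix I J assume "I \<in> multiidx n" "J \<in> multiidx n" "mabs n I = mabs n J"
    from iv_core[OF this, of C]
    show "const_term (act_mono C n (mono J) I) - of_nat (mfact n I) * (if I = J then 1 else 0) = 0"
      by simp
  qed
  show "\<forall>J\<in>multiidx n. \<forall>K\<in>multiidx n. mle J K \<longrightarrow>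
        pairing C n J (mono K) = of_nat (mfact n K) * (if K = J then 1 else 0)"
  proof (intro ballI impI)
    fix J K assume J: "J \<in> multiidx n" and K: "K \<in> multiidx n" and le: "mle J K"
    show "pairing C n J (mono K) = of_nat (mfact n K) * (if K = J then 1 else 0)"
    proof (cases "mabs n J < mabs n K")
      case True
      then have "K \<noteq> J" by auto
      then show ?thesis using A_lt[OF J K True] by simp
    next
      case False
      then have "J = K" using mle_eq[OF le K] by simp
      then show ?thesis using A_eq[OF J K] by simp
    qed
  qed
  let ?d = "\<lambda>K\<in>multiidx n. (\<lambda>M. if M \<in> multiidx n then cc C n K M else 0)"
  show "\<exists>!d. d \<in> (multiidx n \<rightarrow>\<^sub>E pseries n) \<and>
        (\<forall>K\<in>multiidx n. \<forall>J\<in>multiidx n.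
           pairing C n J (d K) = of_nat (mfact n K) * (if K = J then 1 else 0))"
  proof (rule ex1I[of _ ?d])
    show "?d \<in> (multiidx n \<rightarrow>\<^sub>E pseries n) \<and>
        (\<forall>K\<in>multiidx n. \<forall>J\<in>multiidx n.
           pairing C n J (?d K) = of_nat (mfact n K) * (if K = J then 1 else 0))"
      by (auto simp: pseries_def existence)
  next
    fix d assume d: "d \<in> (multiidx n \<rightarrow>\<^sub>E pseries n) \<and>
        (\<forall>K\<in>multiidx n. \<forall>J\<in>multiidx n.
           pairing C n J (d K) = of_nat (mfact n K) * (if K = J then 1 else 0))"
    show "d = ?d"
    proof (rule PiE_ext)
      show "d \<in> multiidx n \<rightarrow>\<^sub>E pseries n" using d by blast
      show "?d \<in> multiidx n \<rightarrow>\<^sub>E pseries n" by (auto simp: pseries_def)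
      fix K assume K: "K \<in> multiidx n"
      show "d K = ?d K"
      proof (rule uniq[where C=C])
        show "d K \<in> pseries n" using d K by blast
        show "?d K \<in> pseries n" using K by (auto simp: pseries_def)
        fix J assume J: "J \<in> multiidx n"
        show "pairing C n J (d K) = pairing C n J (?d K)"
          using d K J existence[OF K J, of C] by simp
      qed
    qed
  qed
qed

end
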